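(* Let $d\ge 2$ and consider the four-party space $\mathbb{C}^d_A\otimes\mathbb{C}^d_B\otimes\mathbb{C}^d_C\otimes\mathbb{C}^d_D$. The states $|\Phi_d\rangle^{AB}\otimes|\Phi_d\rangle^{CD}$ and $|\Phi_d\rangle^{AC}\otimes|\Phi_d\rangle^{BD}$ are both SLOCC maximal, and they are incomparable under $\le_{\mathrm{SLOCC}}$.
   Context: $|\Phi_d\rangle^{XY}=\sum_{i=0}^{d-1}|i\rangle^X|i\rangle^Y$ for orthonormal bases $\{|i\rangle\}$ of the two indicated factors. $|\psi\rangle\le_{\mathrm{SLOCC}}|\phi\rangle$ means $(L_A\otimes L_B\otimes L_C\otimes L_D)|\phi\rangle=|\psi\rangle$ for some linear operators on the respective factors. A state $|\phi\rangle$ is SLOCC maximal if for every $|\psi\rangle$ in the space, $|\phi\rangle\le_{\mathrm{SLOCC}}|\psi\rangle$ implies $|\psi\rangle\le_{\mathrm{SLOCC}}|\phi\rangle$. Incomparable means neither state is $\le_{\mathrm{SLOCC}}$ the other. *)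

theory Defs
  imports Main "HOL.Complex"
begin

text \<open>A vector in C^d_A (x) C^d_B (x) C^d_C (x) C^d_D, given by its coefficients
  in the product of computational bases; the local dimension d is CARD('d).\<close>
type_synonym 'd tensor4 = "'d \<Rightarrow> 'd \<Rightarrow> 'd \<Rightarrow> 'd \<Rightarrow> complex"

type_synonym 'd op = "'d \<Rightarrow> 'd \<Rightarrow> complex"

definition apply_local :: "'d::finite op \<Rightarrow> 'd op \<Rightarrow> 'd op \<Rightarrow> 'd op \<Rightarrow> 'd tensor4 \<Rightarrow> 'd tensor4" where
  "apply_local LA LB LC LD \<phi> = (\<lambda>i j k l.
     \<Sum>a\<in>UNIV. \<Sum>b\<in>UNIV. \<Sum>c\<in>UNIV. \<Sum>e\<in>UNIV.
        LA i a * LB j b * LC k c * LD l e * \<phi> a b c e)"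

definition slocc_le :: "'d::finite tensor4 \<Rightarrow> 'd tensor4 \<Rightarrow> bool" where
  "slocc_le \<psi> \<phi> \<longleftrightarrow> (\<exists>LA LB LC LD. apply_local LA LB LC LD \<phi> = \<psi>)"

definition slocc_maximal :: "'d::finite tensor4 \<Rightarrow> bool" where
  "slocc_maximal \<phi> \<longleftrightarrow> (\<forall>\<psi>. slocc_le \<phi> \<psi> \<longrightarrow> slocc_le \<psi> \<phi>)"

definition slocc_incomparable :: "'d::finite tensor4 \<Rightarrow> 'd tensor4 \<Rightarrow> bool" where
  "slocc_incomparable \<phi> \<psi> \<longleftrightarrow> \<not> slocc_le \<phi> \<psi> \<and> \<not> slocc_le \<psi> \<phi>"

text \<open>|Phi_d>^{AB} (x) |Phi_d>^{CD} = sum_{i,j} |i>_A|i>_B|j>_C|j>_D\<close>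
definition phi_AB_CD :: "'d tensor4" where
  "phi_AB_CD = (\<lambda>a b c e. if a = b \<and> c = e then 1 else 0)"

text \<open>|Phi_d>^{AC} (x) |Phi_d>^{BD} = sum_{i,j} |i>_A|j>_B|i>_C|j>_D\<close>
definition phi_AC_BD :: "'d tensor4" where
  "phi_AC_BD = (\<lambda>a b c e. if a = c \<and> b = e then 1 else 0)"

end

theory Submission
  imports Defs "HOL-Analysis.Analysis"
begin

lemma inv_swap:
  fixes L Y :: "'d::finite op"
  assumes "\<And>i j. (\<Sum>a\<in>UNIV. L i a * Y a j) = (if i = j then 1 else 0)"
  shows "(\<Sum>a\<in>UNIV. Y i a * L a j) = (if i = j then 1 else 0)"
proof -
  let ?A = "(\<chi> i j. L i j) :: complex^'d^'d"
  let ?B = "(\<chi> i j. Y i j) :: complex^'d^'d"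
  have "?A ** ?B = mat 1"
    using assms by (simp add: matrix_matrix_mult_def mat_def vec_eq_iff)
  hence "?B ** ?A = mat 1" using matrix_left_right_inverse by blast
  hence "(?B ** ?A) $ i $ j = mat 1 $ i $ j" by simp
  thus ?thesis by (simp add: matrix_matrix_mult_def mat_def)
qed

definition modeA :: "'d::finite op \<Rightarrow> 'd tensor4 \<Rightarrow> 'd tensor4" where
  "modeA L x = (\<lambda>i b c e. \<Sum>a\<in>UNIV. L i a * x a b c e)"
definition modeB :: "'d::finite op \<Rightarrow> 'd tensor4 \<Rightarrow> 'd tensor4" where
  "modeB L x = (\<lambda>a i c e. \<Sum>b\<in>UNIV. L i b * x a b c e)"
definition modeC :: "'d::finite op \<Rightarrow> 'd tensor4 \<Rightarrow> 'd tensor4" where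
  "modeC L x = (\<lambda>a b i e. \<Sum>c\<in>UNIV. L i c * x a b c e)"
definition modeD :: "'d::finite op \<Rightarrow> 'd tensor4 \<Rightarrow> 'd tensor4" where
  "modeD L x = (\<lambda>a b c i. \<Sum>e\<in>UNIV. L i e * x a b c e)"

definition ocomp :: "'d::finite op \<Rightarrow> 'd op \<Rightarrow> 'd op" where
  "ocomp M L = (\<lambda>i j. \<Sum>a\<in>UNIV. M i a * L a j)"

lemma apply_modes: "apply_local LA LB LC LD x = modeA LA (modeB LB (modeC LC (modeD LD x)))"
  unfolding apply_local_def modeA_def modeB_def modeC_def modeD_def
  by (simp only: sum_distrib_left mult.assoc)

lemma swap_lemma:
  fixes M L :: "'a::finite \<Rightarrow> complex" and X :: "'a \<Rightarrow> 'a \<Rightarrow> complex"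
  shows "(\<Sum>b\<in>UNIV. M b * (\<Sum>a\<in>UNIV. L a * X a b)) = (\<Sum>a\<in>UNIV. L a * (\<Sum>b\<in>UNIV. M b * X a b))"
proof -
  have "(\<Sum>b\<in>UNIV. M b * (\<Sum>a\<in>UNIV. L a * X a b)) = (\<Sum>b\<in>UNIV. \<Sum>a\<in>UNIV. M b * (L a * X a b))"
    by (simp only: sum_distrib_left)
  also have "\<dots> = (\<Sum>a\<in>UNIV. \<Sum>b\<in>UNIV. M b * (L a * X a b))" by (rule sum.swap)
  also have "\<dots> = (\<Sum>a\<in>UNIV. \<Sum>b\<in>UNIV. L a * (M b * X a b))" by (simp only: mult.left_commute)
  also have "\<dots> = (\<Sum>a\<in>UNIV. L a * (\<Sum>b\<in>UNIV. M b * X a b))" by (simp only: sum_distrib_left)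
  finally show ?thesis .
qed

lemma comp_lemma:
  fixes M L :: "'a::finite \<Rightarrow> 'a \<Rightarrow> complex" and X :: "'a \<Rightarrow> complex"
  shows "(\<Sum>a\<in>UNIV. M i a * (\<Sum>b\<in>UNIV. L a b * X b)) = (\<Sum>b\<in>UNIV. (\<Sum>a\<in>UNIV. M i a * L a b) * X b)"
proof -
  have "(\<Sum>a\<in>UNIV. M i a * (\<Sum>b\<in>UNIV. L a b * X b)) = (\<Sum>a\<in>UNIV. \<Sum>b\<in>UNIV. M i a * (L a b * X b))"
    by (simp only: sum_distrib_left)
  also have "\<dots> = (\<Sum>b\<in>UNIV. \<Sum>a\<in>UNIV. M i a * (L a b * X b))" by (rule sum.swap)
  also have "\<dots> = (\<Sum>b\<in>UNIV. (\<Sum>a\<in>UNIV. M i a * L a b) * X b)" by (simp only: sum_distrib_right mult.assoc)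
  finally show ?thesis .
qed

lemma cBA: "modeB M (modeA L x) = modeA L (modeB M x)"
  unfolding modeA_def modeB_def by (intro ext, rule swap_lemma)
lemma cCA: "modeC M (modeA L x) = modeA L (modeC M x)"
  unfolding modeA_def modeC_def by (intro ext, rule swap_lemma)
lemma cDA: "modeD M (modeA L x) = modeA L (modeD M x)"
  unfolding modeA_def modeD_def by (intro ext, rule swap_lemma)
lemma cCB: "modeC M (modeB L x) = modeB L (modeC M x)"
  unfolding modeB_def modeC_def by (intro ext, rule swap_lemma)
lemma cDB: "modeD M (modeB L x) = modeB L (modeD M x)"
  unfolding modeB_def modeD_def by (intro ext, rule swap_lemma)
lemma cDC: "modeD M (modeC L x) = modeC L (modeD M x)"
  unfolding modeC_def modeD_def by (intro ext, rule swap_lemma)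

lemma kA: "modeA M (modeA L x) = modeA (ocomp M L) x"
  unfolding modeA_def ocomp_def by (intro ext, rule comp_lemma)
lemma kB: "modeB M (modeB L x) = modeB (ocomp M L) x"
  unfolding modeB_def ocomp_def by (intro ext, rule comp_lemma)
lemma kC: "modeC M (modeC L x) = modeC (ocomp M L) x"
  unfolding modeC_def ocomp_def by (intro ext, rule comp_lemma)
lemma kD: "modeD M (modeD L x) = modeD (ocomp M L) x"
  unfolding modeD_def ocomp_def by (intro ext, rule comp_lemma)

definition idop :: "'d op" where "idop = (\<lambda>i j. if i = j then 1 else 0)"

lemma delta: "(\<Sum>a\<in>(UNIV::'a::finite set). (if i = a then 1 else 0) * (f a :: complex)) = f i"
proof -
  have "(\<Sum>a\<in>(UNIV::'a set). (if i = a then 1 else 0) * f a) = (\<Sum>a\<in>UNIV. if i = a then f a else 0)"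
    by (rule sum.cong) auto
  thus ?thesis by simp
qed

lemma iA: "modeA idop x = x" unfolding modeA_def idop_def by (simp only: delta)
lemma iB: "modeB idop x = x" unfolding modeB_def idop_def by (simp only: delta)
lemma iC: "modeC idop x = x" unfolding modeC_def idop_def by (simp only: delta)
lemma iD: "modeD idop x = x" unfolding modeD_def idop_def by (simp only: delta)

lemma rinv:
  assumes "\<And>i j. (\<Sum>a\<in>UNIV. L i a * Y a j) = (if i = j then 1 else 0)"
  shows "\<exists>Y. ocomp L Y = idop"
  unfolding ocomp_def idop_def by (rule exI[of _ Y], intro ext, rule assms)

lemma maxgen:
  assumes h: "apply_local LA LB LC LD \<psi> = \<phi>"
    and "\<exists>Y. ocomp LA Y = idop" "\<exists>Y. ocomp LB Y = idop"
        "\<exists>Y. ocomp LC Y = idop" "\<exists>Y. ocomp LD Y = idop"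
  shows "slocc_le \<psi> \<phi>"
proof -
  have li: "\<exists>Y. ocomp Y L = idop" if "\<exists>Y. ocomp L Y = idop" for L :: "'a op"
  proof -
    from that obtain Y where "ocomp L Y = idop" by blast
    hence "ocomp Y L = idop" using inv_swap[of L Y]
      by (simp add: ocomp_def idop_def fun_eq_iff)
    thus ?thesis by blast
  qed
  obtain YA YB YC YD where y: "ocomp YA LA = idop" "ocomp YB LB = idop"
    "ocomp YC LC = idop" "ocomp YD LD = idop"
    using li assms(2-5) by metis
  have "apply_local YA YB YC YD \<phi> = \<psi>"
    unfolding h[symmetric] apply_modes
    by (simp add: cBA cCA cDA cCB cDB cDC kA kB kC kD y iA iB iC iD)
  thus ?thesis unfolding slocc_le_def by blast
qed

lemma fD: "modeD L phi_AB_CD = (\<lambda>a b c i. if a = b then L i c else 0)"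
  unfolding modeD_def phi_AB_CD_def by (auto simp: fun_eq_iff if_distrib cong: if_cong)
lemma fC: "modeC M (\<lambda>a b c i. if a = b then L i c else 0) = (\<lambda>a b k i. if a = b then (\<Sum>c\<in>UNIV. M k c * L i c) else 0)"
  unfolding modeC_def by (auto simp: fun_eq_iff)
lemma fB: "modeB M (\<lambda>a b k i. if a = b then Q k i else 0) = (\<lambda>a j k i. M j a * Q k i)"
  unfolding modeB_def by (auto simp: fun_eq_iff if_distrib cong: if_cong)
lemma fA: "modeA M (\<lambda>a j k i. N j a * Q k i) = (\<lambda>a' j k i. (\<Sum>a\<in>UNIV. M a' a * N j a) * Q k i)"
  unfolding modeA_def by (auto simp: fun_eq_iff sum_distrib_right mult.assoc)

lemma factor:
  "apply_local LA LB LC LD phi_AB_CD a b c e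
     = (\<Sum>x\<in>UNIV. LA a x * LB b x) * (\<Sum>y\<in>UNIV. LC c y * LD e y)"
  unfolding apply_modes fD fC fB fA ..

lemma sA1: assumes hA: "modeA L W = (phi_AB_CD :: 'd::finite tensor4)"
 shows "\<exists>Y. ocomp L Y = idop"
proof (rule rinv[of L "\<lambda>a j. W a j k0 k0"])
  fix i j
  have "modeA L W i j k0 k0 = phi_AB_CD i j k0 k0" using hA by simp
  thus "(\<Sum>a\<in>UNIV. L i a * W a j k0 k0) = (if i = j then 1 else 0)"
    by (auto simp add: modeA_def phi_AB_CD_def)
qed
lemma sB1: assumes hA: "modeB L W = (phi_AB_CD :: 'd::finite tensor4)"
 shows "\<exists>Y. ocomp L Y = idop"
proof (rule rinv[of L "\<lambda>a j. W j a k0 k0"])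
  fix i j
  have "modeB L W j i k0 k0 = phi_AB_CD j i k0 k0" using hA by simp
  thus "(\<Sum>a\<in>UNIV. L i a * W j a k0 k0) = (if i = j then 1 else 0)"
    by (auto simp add: modeB_def phi_AB_CD_def)
qed
lemma sC1: assumes hA: "modeC L W = (phi_AB_CD :: 'd::finite tensor4)"
 shows "\<exists>Y. ocomp L Y = idop"
proof (rule rinv[of L "\<lambda>a j. W k0 k0 a j"])
  fix i j
  have "modeC L W k0 k0 i j = phi_AB_CD k0 k0 i j" using hA by simp
  thus "(\<Sum>a\<in>UNIV. L i a * W k0 k0 a j) = (if i = j then 1 else 0)"
    by (auto simp add: modeC_def phi_AB_CD_def)
qed
lemma sD1: assumes hA: "modeD L W = (phi_AB_CD :: 'd::finite tensor4)"
 shows "\<exists>Y. ocomp L Y = idop"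
proof (rule rinv[of L "\<lambda>a j. W k0 k0 j a"])
  fix i j
  have "modeD L W k0 k0 j i = phi_AB_CD k0 k0 j i" using hA by simp
  thus "(\<Sum>a\<in>UNIV. L i a * W k0 k0 j a) = (if i = j then 1 else 0)"
    by (auto simp add: modeD_def phi_AB_CD_def)
qed
lemma sA2: assumes hA: "modeA L W = (phi_AC_BD :: 'd::finite tensor4)"
 shows "\<exists>Y. ocomp L Y = idop"
proof (rule rinv[of L "\<lambda>a j. W a k0 j k0"])
  fix i j
  have "modeA L W i k0 j k0 = phi_AC_BD i k0 j k0" using hA by simp
  thus "(\<Sum>a\<in>UNIV. L i a * W a k0 j k0) = (if i = j then 1 else 0)"
    by (auto simp add: modeA_def phi_AC_BD_def)
qed
lemma sB2: assumes hA: "modeB L W = (phi_AC_BD :: 'd::finite tensor4)"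
 shows "\<exists>Y. ocomp L Y = idop"
proof (rule rinv[of L "\<lambda>a j. W k0 a k0 j"])
  fix i j
  have "modeB L W k0 i k0 j = phi_AC_BD k0 i k0 j" using hA by simp
  thus "(\<Sum>a\<in>UNIV. L i a * W k0 a k0 j) = (if i = j then 1 else 0)"
    by (auto simp add: modeB_def phi_AC_BD_def)
qed
lemma sC2: assumes hA: "modeC L W = (phi_AC_BD :: 'd::finite tensor4)"
 shows "\<exists>Y. ocomp L Y = idop"
proof (rule rinv[of L "\<lambda>a j. W j k0 a k0"])
  fix i j
  have "modeC L W j k0 i k0 = phi_AC_BD j k0 i k0" using hA by simp
  thus "(\<Sum>a\<in>UNIV. L i a * W j k0 a k0) = (if i = j then 1 else 0)"
    by (auto simp add: modeC_def phi_AC_BD_def)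
qed
lemma sD2: assumes hA: "modeD L W = (phi_AC_BD :: 'd::finite tensor4)"
 shows "\<exists>Y. ocomp L Y = idop"
proof (rule rinv[of L "\<lambda>a j. W k0 j k0 a"])
  fix i j
  have "modeD L W k0 j k0 i = phi_AC_BD k0 j k0 i" using hA by simp
  thus "(\<Sum>a\<in>UNIV. L i a * W k0 j k0 a) = (if i = j then 1 else 0)"
    by (auto simp add: modeD_def phi_AC_BD_def)
qed
lemma invX:
  assumes h: "apply_local LA LB LC LD \<psi> = \<phi>"
  shows "modeA LA (modeB LB (modeC LC (modeD LD \<psi>))) = \<phi>"
    "modeB LB (modeA LA (modeC LC (modeD LD \<psi>))) = \<phi>"
    "modeC LC (modeA LA (modeB LB (modeD LD \<psi>))) = \<phi>"
    "modeD LD (modeA LA (modeB LB (modeC LC \<psi>))) = \<phi>"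
  using h by (simp_all add: apply_modes cBA cCA cCB cDA cDB cDC)

lemma invAB:
  assumes h: "apply_local LA LB LC LD \<psi> = (phi_AB_CD :: 'd::finite tensor4)"
  shows "\<exists>Y. ocomp LA Y = idop" "\<exists>Y. ocomp LB Y = idop"
        "\<exists>Y. ocomp LC Y = idop" "\<exists>Y. ocomp LD Y = idop"
  using sA1[OF invX(1)[OF h]] sB1[OF invX(2)[OF h]] sC1[OF invX(3)[OF h]] sD1[OF invX(4)[OF h]] by auto

lemma invAC:
  assumes h: "apply_local LA LB LC LD \<psi> = (phi_AC_BD :: 'd::finite tensor4)"
  shows "\<exists>Y. ocomp LA Y = idop" "\<exists>Y. ocomp LB Y = idop"
        "\<exists>Y. ocomp LC Y = idop" "\<exists>Y. ocomp LD Y = idop"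
  using sA2[OF invX(1)[OF h]] sB2[OF invX(2)[OF h]] sC2[OF invX(3)[OF h]] sD2[OF invX(4)[OF h]] by auto

lemma not_le:
  assumes "card (UNIV :: 'd::finite set) \<ge> 2"
  shows "\<not> slocc_le (phi_AC_BD :: 'd tensor4) phi_AB_CD"
proof
  assume "slocc_le (phi_AC_BD :: 'd tensor4) phi_AB_CD"
  then obtain LA LB LC LD where h: "apply_local LA LB LC LD phi_AB_CD = (phi_AC_BD :: 'd tensor4)"
    unfolding slocc_le_def by blast
  obtain x y :: 'd where xy: "x \<noteq> y"
  proof (rule ccontr)
    assume "\<not> thesis"
    hence "\<forall>x y::'d. x = y" using that by blast
    hence u: "(UNIV :: 'd set) = {undefined}" by auto
    have "CARD('d) = 1" by (subst u) simp
    thus False using assms by simp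
  qed
  define P where "P = (\<lambda>a b. \<Sum>x\<in>UNIV. LA a x * LB b x)"
  define Q where "Q = (\<lambda>a b. \<Sum>y\<in>UNIV. LC a y * LD b y)"
  have e: "P a b * Q c e = phi_AC_BD a b c e" for a b c e
    using h factor[of LA LB LC LD a b c e] unfolding P_def Q_def by simp
  have 1: "P x y * Q x y = 1" using e[of x y x y] by (simp add: phi_AC_BD_def)
  have 2: "P y x * Q y x = 1" using e[of y x y x] by (simp add: phi_AC_BD_def)
  have 3: "P x y * Q y x = 0" using e[of x y y x] xy by (simp add: phi_AC_BD_def)
  from 1 have "P x y \<noteq> 0" by auto
  moreover from 2 have "Q y x \<noteq> 0" by auto
  ultimately show False using 3 by simp
qed

theorem mainTheorem8:
  assumes "card (UNIV :: 'd::finite set) \<ge> 2"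
  shows "slocc_maximal (phi_AB_CD :: 'd tensor4) \<and> slocc_maximal (phi_AC_BD :: 'd tensor4)
         \<and> slocc_incomparable (phi_AB_CD :: 'd tensor4) phi_AC_BD"
proof -
  have m1: "slocc_maximal (phi_AB_CD :: 'd tensor4)"
    unfolding slocc_maximal_def
  proof (intro allI impI)
    fix \<psi> :: "'d tensor4" assume "slocc_le phi_AB_CD \<psi>"
    then obtain LA LB LC LD where h: "apply_local LA LB LC LD \<psi> = phi_AB_CD"
      unfolding slocc_le_def by blast
    show "slocc_le \<psi> phi_AB_CD" using maxgen[OF h invAB[OF h]] .
  qed
  have m2: "slocc_maximal (phi_AC_BD :: 'd tensor4)"
    unfolding slocc_maximal_def
  proof (intro allI impI)
    fix \<psi> :: "'d tensor4" assume "slocc_le phi_AC_BD \<psi>"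
    then obtain LA LB LC LD where h: "apply_local LA LB LC LD \<psi> = phi_AC_BD"
      unfolding slocc_le_def by blast
    show "slocc_le \<psi> phi_AC_BD" using maxgen[OF h invAC[OF h]] .
  qed
  have n: "\<not> slocc_le (phi_AC_BD :: 'd tensor4) phi_AB_CD" using not_le assms by blast
  have "\<not> slocc_le (phi_AB_CD :: 'd tensor4) phi_AC_BD"
    using m1 n unfolding slocc_maximal_def by blast
  thus ?thesis using m1 m2 n unfolding slocc_incomparable_def by blast
qed

end
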